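(* Fix a constant $\alpha\ge 1$. Let $T$ be the uncompressed octree over $[0,U]^3$, with $U$ a power of $2$. For each node $u$ of $T$, let $P(u)$ be defined as in the context. Then every $\alpha$-fat axis-parallel box $R$ with integer corner coordinates in $[0,U]$ satisfies $R\in P(u)$ for at most $O(1)$ nodes $u$ of $T$, where the constant depends only on $\alpha$.
   Context: The uncompressed octree $T$ over $[0,U]^3$ is the complete tree in which the root has cell $\mathrm{cell}(\text{root})=[0,U]^3$. Every node whose cell has side length greater than $1$ has eight children, whose cells are the eight equal octants of its cell. For a node $u$, the set $P(u)$ consists of all boxes $R$ such that (i) $R$ contains at least one corner (vertex) of $\mathrm{cell}(u)$, and (ii) $R$ contains no corner of $\mathrm{cell}(w)$ for any proper ancestor $w$ of $u$. Boxes are closed. An axis-parallel box is $\alpha$-fat if the ratio of its longest edge length to its shortest edge length is at most $\alpha$. *)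

theory Defs
  imports "HOL-Analysis.Analysis"
begin

text \<open>Octree over [0,U]^3 with U = 2^m. A node is a pair (k, j): level k (0 = root,
  k \<le> m) and integer position j with 0 \<le> j_i < 2^k. Its cell has side 2^(m-k)
  and lower corner 2^(m-k) * j.\<close>

type_synonym onode = "nat \<times> (nat ^ 3)"

definition octree_node :: "nat \<Rightarrow> onode \<Rightarrow> bool" where
  "octree_node m u \<longleftrightarrow> fst u \<le> m \<and> (\<forall>i. snd u $ i < 2 ^ fst u)"

definition cell_lo :: "nat \<Rightarrow> onode \<Rightarrow> real ^ 3" where
  "cell_lo m u = (\<chi> i. real (2 ^ (m - fst u) * (snd u $ i)))"

definition cell_hi :: "nat \<Rightarrow> onode \<Rightarrow> real ^ 3" where
  "cell_hi m u = (\<chi> i. real (2 ^ (m - fst u) * (snd u $ i + 1)))"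

definition cell :: "nat \<Rightarrow> onode \<Rightarrow> (real ^ 3) set" where
  "cell m u = cbox (cell_lo m u) (cell_hi m u)"

definition cell_corners :: "nat \<Rightarrow> onode \<Rightarrow> (real ^ 3) set" where
  "cell_corners m u = {x. \<forall>i. x $ i = cell_lo m u $ i \<or> x $ i = cell_hi m u $ i}"

text \<open>w is a proper ancestor of u: a node at a strictly smaller level whose cell
  contains the cell of u (cells of one level tile the cube, so this is the tree ancestor).\<close>
definition proper_ancestor :: "nat \<Rightarrow> onode \<Rightarrow> onode \<Rightarrow> bool" where
  "proper_ancestor m w u \<longleftrightarrow> octree_node m w \<and> fst w < fst u \<and> cell m u \<subseteq> cell m w"

definition P :: "nat \<Rightarrow> onode \<Rightarrow> (real ^ 3) set set" where
  "P m u = {R. (\<exists>c\<in>cell_corners m u. c \<in> R) \<and>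
              (\<forall>w. proper_ancestor m w u \<longrightarrow> (\<forall>c\<in>cell_corners m w. c \<notin> R))}"

definition fat :: "real \<Rightarrow> real ^ 3 \<Rightarrow> real ^ 3 \<Rightarrow> bool" where
  "fat \<alpha> lo hi \<longleftrightarrow> (\<forall>i j. hi $ i - lo $ i \<le> \<alpha> * (hi $ j - lo $ j))"

end

theory Submission
  imports Defs
begin

lemma cell_lo_nth: "cell_lo m u $ i = real (2^(m - fst u) * snd u $ i)"
  by (simp add: cell_lo_def)
lemma cell_hi_nth: "cell_hi m u $ i = real (2^(m - fst u) * (snd u $ i + 1))"
  by (simp add: cell_hi_def)

lemma corner_cases:
  assumes "c \<in> cell_corners m u"
  shows "c$i = real (2^(m - fst u) * snd u $ i) \<or> c$i = real (2^(m - fst u) * (snd u $ i + 1))"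
  using assms unfolding cell_corners_def cell_lo_nth cell_hi_nth by blast

lemma corner_in_box:
  assumes "c \<in> cell_corners m u" "c \<in> cbox lo hi"
  shows "real (2^(m - fst u) * snd u $ i) \<le> hi $ i \<and> lo $ i \<le> real (2^(m - fst u) * (snd u $ i + 1))"
proof -
  have le: "real (2^(m - fst u) * snd u $ i) \<le> real (2^(m - fst u) * (snd u $ i + 1))"
    by simp
  have "lo $ i \<le> c $ i" "c $ i \<le> hi $ i" using assms(2) by (auto simp: mem_box_cart)
  then show ?thesis using corner_cases[OF assms(1), of i] le
    by (elim disjE) linarith+
qed

definition par :: "onode \<Rightarrow> onode" where
  "par u = (fst u - 1, \<chi> i. snd u $ i div 2)"

lemma par_pow: "1 \<le> fst u \<Longrightarrow> fst u \<le> m \<Longrightarrow> (2::nat)^(m - fst (par u)) = 2 * 2^(m - fst u)"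
proof -
  assume a: "1 \<le> fst u" "fst u \<le> m"
  have "m - fst (par u) = Suc (m - fst u)" using a by (simp add: par_def)
  then show ?thesis by simp
qed

lemma par_lo: "1 \<le> fst u \<Longrightarrow> fst u \<le> m \<Longrightarrow>
   cell_lo m (par u) $ i = real (2 * 2^(m - fst u) * (snd u $ i div 2))"
  unfolding cell_lo_nth par_pow by (simp add: par_def)
lemma par_hi: "1 \<le> fst u \<Longrightarrow> fst u \<le> m \<Longrightarrow>
   cell_hi m (par u) $ i = real (2 * 2^(m - fst u) * (snd u $ i div 2 + 1))"
  unfolding cell_hi_nth par_pow by (simp add: par_def)

lemma par_anc:
  assumes "octree_node m u" "1 \<le> fst u"
  shows "proper_ancestor m (par u) u"
proof -
  have km: "fst u \<le> m" using assms(1) by (simp add: octree_node_def)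
  have "octree_node m (par u)"
  proof -
    have "snd u $ i div 2 < 2 ^ (fst u - 1)" for i
    proof -
      have "snd u $ i < 2 ^ fst u" using assms(1) by (simp add: octree_node_def)
      also have "(2::nat) ^ fst u = 2 * 2 ^ (fst u - 1)" using assms(2)
        by (metis One_nat_def Suc_pred less_eq_Suc_le power_Suc)
      finally show ?thesis by simp
    qed
    then show ?thesis using km by (simp add: octree_node_def par_def)
  qed
  moreover have "fst (par u) < fst u" using assms(2) by (simp add: par_def)
  moreover have "cell m u \<subseteq> cell m (par u)"
  proof
    fix x assume x: "x \<in> cell m u"
    show "x \<in> cell m (par u)"
      unfolding cell_def mem_box_cart
    proof
      fix i
      let ?A = "(2::nat)^(m - fst u)" and ?j = "snd u $ i"
      have "?A * (2 * (?j div 2)) \<le> ?A * ?j"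
        by (rule mult_le_mono2) (use mult_div_mod_eq[of 2 ?j] in linarith)
      then have 1: "2 * ?A * (?j div 2) \<le> ?A * ?j"
        by (simp only: mult.assoc mult.left_commute[of "2::nat"])
      have "?j + 1 \<le> 2 * (?j div 2 + 1)" unfolding distrib_left mult_1_right using mult_div_mod_eq[of 2 ?j] mod_less_divisor[of 2 ?j, OF zero_less_numeral] by linarith
      then have "?A * (?j + 1) \<le> ?A * (2 * (?j div 2 + 1))"
        by (rule mult_le_mono2)
      then have 2: "?A * (?j + 1) \<le> 2 * ?A * (?j div 2 + 1)"
        by (simp only: mult.assoc mult.left_commute[of "2::nat"])
      have "cell_lo m u $ i \<le> x $ i \<and> x $ i \<le> cell_hi m u $ i"
        using x unfolding cell_def mem_box_cart by blast
      then show "cell_lo m (par u) $ i \<le> x $ i \<and> x $ i \<le> cell_hi m (par u) $ i"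
        using par_lo[OF assms(2) km, of i] par_hi[OF assms(2) km, of i] cell_lo_nth[of m u i] cell_hi_nth[of m u i]
        using 1[folded of_nat_le_iff[where 'a=real]] 2[folded of_nat_le_iff[where 'a=real]] by linarith
    qed
  qed
  ultimately show ?thesis by (simp add: proper_ancestor_def)
qed

lemma lo_le_hi: "cell_lo m u $ i \<le> cell_hi m u $ i"
  unfolding cell_lo_nth cell_hi_nth by simp

lemma corner_in_cell: "c \<in> cell_corners m u \<Longrightarrow> c \<in> cell m u"
  unfolding cell_def mem_box_cart cell_corners_def
proof (intro allI, elim CollectE)
  fix i assume "\<forall>i. c $ i = cell_lo m u $ i \<or> c $ i = cell_hi m u $ i"
  then have "c $ i = cell_lo m u $ i \<or> c $ i = cell_hi m u $ i" by blast
  then show "cell_lo m u $ i \<le> c $ i \<and> c $ i \<le> cell_hi m u $ i" using lo_le_hi[of m u i] by auto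
qed

lemma par_hi_lo: "1 \<le> fst u \<Longrightarrow> fst u \<le> m \<Longrightarrow>
   cell_hi m (par u) $ i = cell_lo m (par u) $ i + 2 * 2^(m - fst u)"
  by (simp add: par_lo par_hi algebra_simps)

lemma L1:
  assumes u: "octree_node m u" and PP: "cbox lo hi \<in> P m u" and k: "1 \<le> fst u"
  shows "\<exists>i. hi$i - lo$i < 2 * 2^(m - fst u)"
proof (rule ccontr)
  assume "\<not> ?thesis"
  then have big: "\<And>i. 2 * 2^(m - fst u) \<le> hi$i - lo$i" by (simp add: not_less)
  have km: "fst u \<le> m" using u by (simp add: octree_node_def)
  from PP obtain c where c: "c \<in> cell_corners m u" "c \<in> cbox lo hi" by (auto simp: P_def)
  have anc: "proper_ancestor m (par u) u" using par_anc[OF u k] .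
  have none: "\<forall>c\<in>cell_corners m (par u). c \<notin> cbox lo hi" using PP anc unfolding P_def by blast
  define x where "x = (\<chi> i. if lo$i \<le> cell_lo m (par u) $ i then cell_lo m (par u) $ i else cell_hi m (par u) $ i)"
  have "x \<in> cell_corners m (par u)" by (simp add: x_def cell_corners_def)
  moreover have "x \<in> cbox lo hi" unfolding mem_box_cart
  proof
    fix i
    have ci: "lo$i \<le> c$i" "c$i \<le> hi$i" using c(2) by (auto simp: mem_box_cart)
    have "c \<in> cell m (par u)" using corner_in_cell[OF c(1)] anc by (auto simp: proper_ancestor_def)
    then have cp: "cell_lo m (par u) $ i \<le> c$i" "c$i \<le> cell_hi m (par u) $ i"
      by (auto simp: cell_def mem_box_cart)
    note hl = par_hi_lo[OF k km, of i]
    note bi = big[of i]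
    show "lo$i \<le> x$i \<and> x$i \<le> hi$i"
    proof (cases "lo$i \<le> cell_lo m (par u) $ i")
      case True
      then show ?thesis using ci cp by (simp add: x_def)
    next
      case False
      then show ?thesis using ci cp hl bi by (simp add: x_def)
    qed
  qed
  ultimately show False using none by blast
qed

lemma L2:
  assumes u1: "octree_node m u1" "cbox lo hi \<in> P m u1"
    and u2: "octree_node m u2" "cbox lo hi \<in> P m u2" and lt: "fst u1 < fst u2"
  shows "\<exists>i. (2::real)^(m - fst u2) \<le> hi$i - lo$i"
proof -
  have k2: "1 \<le> fst u2" using lt by simp
  have km2: "fst u2 \<le> m" using u2 by (simp add: octree_node_def)
  from u1(2) obtain c1 where c1: "c1 \<in> cell_corners m u1" "c1 \<in> cbox lo hi" by (auto simp: P_def)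
  from u2(2) obtain c2 where c2: "c2 \<in> cell_corners m u2" "c2 \<in> cbox lo hi" by (auto simp: P_def)
  have anc: "proper_ancestor m (par u2) u2" using par_anc[OF u2(1) k2] .
  have "c2 \<notin> cell_corners m (par u2)" using u2(2) anc c2(2) unfolding P_def by blast
  then obtain i where ne: "c2$i \<noteq> cell_lo m (par u2) $ i" "c2$i \<noteq> cell_hi m (par u2) $ i"
    unfolding cell_corners_def by blast
  define A where "A = (2::nat)^(m - fst u2)"
  define j where "j = snd u2 $ i"
  define q where "q = j div 2"
  have plo: "cell_lo m (par u2) $ i = real (2*A*q)" using par_lo[OF k2 km2, of i] by (simp add: A_def j_def q_def)
  have phi: "cell_hi m (par u2) $ i = real (2*A*(q+1))" using par_hi[OF k2 km2, of i] by (simp add: A_def j_def q_def)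
  have cc2: "c2$i = real (A*j) \<or> c2$i = real (A*(j+1))" using corner_cases[OF c2(1), of i] by (simp add: A_def j_def)
  have jm: "j mod 2 = 0 \<or> j mod 2 = 1" by auto
  have jq: "j = 2*q + j mod 2" using mult_div_mod_eq[of 2 j] by (simp add: q_def)
  have c2v: "c2$i = real (A*(2*q+1))"
  proof (cases "j mod 2 = 0")
    case True
    then have "j = 2*q" using jq by simp
    then have "A*j = 2*A*q" "A*(j+1) = A*(2*q+1)" by (simp_all add: ac_simps)
    then show ?thesis using cc2 ne plo by auto
  next
    case False
    then have "j = 2*q+1" using jq jm by simp
    then have "A*(j+1) = 2*A*(q+1)" "A*j = A*(2*q+1)" by (simp_all add: algebra_simps)
    then show ?thesis using cc2 ne phi by auto
  qed
  define d where "d = fst u2 - fst u1 - 1"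
  have md: "m - fst u1 = (m - fst u2) + Suc d" using km2 lt by (simp add: d_def)
  define t where "t = (if c1$i = real (2^(m - fst u1) * snd u1 $ i) then snd u1 $ i else snd u1 $ i + 1)"
  have "c1$i = real (2^(m - fst u1) * t)" using corner_cases[OF c1(1), of i] by (auto simp: t_def algebra_simps)
  also have "(2::nat)^(m - fst u1) * t = 2*A*(2^d*t)" unfolding md A_def by (simp add: power_add ac_simps)
  finally have c1v: "c1$i = real (2*A*(2^d*t))" .
  define p where "p = 2^d*t"
  have ci: "lo$i \<le> c1$i" "c1$i \<le> hi$i" "lo$i \<le> c2$i" "c2$i \<le> hi$i"
    using c1(2) c2(2) by (auto simp: mem_box_cart)
  have "real A \<le> hi$i - lo$i"
  proof (cases "p \<le> q")
    case True
    have "A*(2*p+1) \<le> A*(2*q+1)" by (rule mult_le_mono2) (use True in linarith)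
    moreover have "A*(2*p+1) = 2*A*p + A" by (simp add: algebra_simps)
    ultimately have "real (2*A*p) + real A \<le> real (A*(2*q+1))" by (metis of_nat_add of_nat_le_iff)
    then show ?thesis using ci c1v c2v p_def by simp
  next
    case False
    have "A*(2*q+1+1) \<le> A*(2*p)" by (rule mult_le_mono2) (use False in linarith)
    moreover have "A*(2*q+1+1) = A*(2*q+1) + A" by (simp add: algebra_simps)
    moreover have "A*(2*p) = 2*A*p" by simp
    ultimately have "real (A*(2*q+1)) + real A \<le> real (2*A*p)" by (metis of_nat_add of_nat_le_iff)
    then show ?thesis using ci c1v c2v p_def by simp
  qed
  then show ?thesis by (auto simp: A_def)
qed

lemma L3:
  assumes al: "\<alpha> \<ge> 1" and ft: "fat \<alpha> lo hi" and L: "2*\<alpha> \<le> real L"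
    and u1: "octree_node m u1" "cbox lo hi \<in> P m u1"
    and u2: "octree_node m u2" "cbox lo hi \<in> P m u2"
    and u3: "octree_node m u3" "cbox lo hi \<in> P m u3"
    and lt: "fst u1 < fst u2" and le: "fst u2 \<le> fst u3"
  shows "fst u3 < fst u2 + L"
proof (rule ccontr)
  assume "\<not> ?thesis"
  then have ge: "fst u2 + L \<le> fst u3" by simp
  obtain i where i: "(2::real)^(m - fst u2) \<le> hi$i - lo$i" using L2[OF u1 u2 lt] by blast
  have k3: "1 \<le> fst u3" using lt le by simp
  have km3: "fst u3 \<le> m" using u3 by (simp add: octree_node_def)
  obtain i' where i': "hi$i' - lo$i' < 2 * 2^(m - fst u3)" using L1[OF u3 k3] by blast
  have "hi$i - lo$i \<le> \<alpha> * (hi$i' - lo$i')" using ft by (simp add: fat_def)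
  also have "\<dots> < \<alpha> * (2 * 2^(m - fst u3))" using i' al by (intro mult_strict_left_mono) auto
  finally have lt1: "(2::real)^(m - fst u2) < 2*\<alpha> * 2^(m - fst u3)" using i by simp
  have "(2::real)^(m - fst u2) = 2^(m - fst u3) * 2^(fst u3 - fst u2)"
  proof -
    have "m - fst u2 = (m - fst u3) + (fst u3 - fst u2)" using km3 le by arith
    then show ?thesis by (simp only: power_add)
  qed
  moreover have "(2::real)^L \<le> 2^(fst u3 - fst u2)" using ge by (intro power_increasing) auto
  moreover have "real L \<le> (2::real)^L"
  proof -
    have "L < 2^L" by (rule less_exp)
    then have "real L < real (2^L)" by linarith
    then show ?thesis by simp
  qed
  ultimately have "2*\<alpha> * 2^(m - fst u3) \<le> (2::real)^(m - fst u2)"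
  proof -
    assume e: "(2::real)^(m - fst u2) = 2^(m - fst u3) * 2^(fst u3 - fst u2)"
      and p1: "(2::real)^L \<le> 2^(fst u3 - fst u2)" and p2: "real L \<le> (2::real)^L"
    have "2*\<alpha> \<le> (2::real)^(fst u3 - fst u2)" using L p1 p2 by linarith
    then have "2*\<alpha> * 2^(m - fst u3) \<le> 2^(fst u3 - fst u2) * (2::real)^(m - fst u3)"
      by (rule mult_right_mono) simp
    then show ?thesis using e by (simp add: mult.commute)
  qed
  then show False using lt1 by simp
qed

lemma vec3_eq: "(j::nat^3) = vector [j$1, j$2, j$3]"
  by (simp add: vec_eq_iff forall_3 vector_3)

lemma level_card:
  assumes al: "\<alpha> \<ge> 1" and ft: "fat \<alpha> lo hi"
    and N: "2*\<alpha> + 2 \<le> real N"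
    and u0: "octree_node m u0" "cbox lo hi \<in> P m u0" "fst u0 = k" and k: "1 \<le> k"
  shows "card {u. (octree_node m u \<and> cbox lo hi \<in> P m u) \<and> fst u = k} \<le> N^3"
proof -
  define \<sigma> where "\<sigma> = (2::real)^(m - k)"
  have sp: "\<sigma> > 0" by (simp add: \<sigma>_def)
  obtain i0 where i0: "hi$i0 - lo$i0 < 2 * \<sigma>" using L1[OF u0(1,2)] u0(3) k by (auto simp: \<sigma>_def)
  have e: "hi$i - lo$i < 2*\<alpha>*\<sigma>" for i
  proof -
    have "hi$i - lo$i \<le> \<alpha> * (hi$i0 - lo$i0)" using ft by (simp add: fat_def)
    also have "\<dots> < \<alpha> * (2*\<sigma>)" using i0 al by (intro mult_strict_left_mono) auto
    finally show ?thesis by simp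
  qed
  define n0 where "n0 i = nat \<lceil>lo$i / \<sigma> - 1\<rceil>" for i :: 3
  define A where "A i = {n0 i..<n0 i + N}" for i :: 3
  have inA: "snd u $ i \<in> A i" if u: "octree_node m u" "cbox lo hi \<in> P m u" "fst u = k" for u i
  proof -
    from u(2) obtain c where c: "c \<in> cell_corners m u" "c \<in> cbox lo hi" by (auto simp: P_def)
    have cb: "real (2^(m - fst u) * snd u $ i) \<le> hi $ i \<and> lo $ i \<le> real (2^(m - fst u) * (snd u $ i + 1))"
      using corner_in_box[OF c] .
    define j where "j = snd u $ i"
    have a: "\<sigma> * real j \<le> hi$i" and b: "lo$i \<le> \<sigma> * (real j + 1)"
      using cb u(3) by (simp_all add: \<sigma>_def j_def algebra_simps)
    have q1: "\<sigma> * (lo$i/\<sigma> - 1) = lo$i - \<sigma>" using sp by (simp add: right_diff_distrib)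
    have q2: "\<sigma> * (lo$i/\<sigma> + 2*\<alpha>) = lo$i + 2*\<alpha>*\<sigma>" using sp by (simp add: distrib_left)
    have "\<sigma> * (lo$i/\<sigma> - 1) \<le> \<sigma> * real j" using b q1 by (simp add: algebra_simps)
    then have l: "lo$i/\<sigma> - 1 \<le> real j" using sp by simp
    have "\<sigma> * real j < \<sigma> * (lo$i/\<sigma> + 2*\<alpha>)" using a e[of i] q2 by linarith
    then have h: "real j < lo$i/\<sigma> + 2*\<alpha>" using sp by simp
    have "\<lceil>lo$i/\<sigma> - 1\<rceil> \<le> int j" using l ceiling_le_iff[of "lo$i/\<sigma> - 1" "int j"] by (simp del: ceiling_diff_one)
    then have n1: "n0 i \<le> j" by (simp add: n0_def)
    have zn: "real_of_int z \<le> real (nat z)" for z by (cases "z \<ge> 0") auto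
    have "lo$i/\<sigma> - 1 \<le> real (n0 i)" unfolding n0_def
      using le_of_int_ceiling[of "lo$i/\<sigma> - 1"] zn[of "\<lceil>lo$i/\<sigma> - 1\<rceil>"] by linarith
    then have "real j < real (n0 i + N)" using h N by simp
    then have n2: "j < n0 i + N" by linarith
    show ?thesis using n1 n2 by (simp add: A_def j_def)
  qed
  let ?f = "\<lambda>(a,b,c). (k, vector [a,b,c] :: nat^3)"
  have sub: "{u. (octree_node m u \<and> cbox lo hi \<in> P m u) \<and> fst u = k} \<subseteq> ?f ` (A 1 \<times> A 2 \<times> A 3)"
  proof
    fix u assume "u \<in> {u. (octree_node m u \<and> cbox lo hi \<in> P m u) \<and> fst u = k}"
    then have u: "octree_node m u" "cbox lo hi \<in> P m u" "fst u = k" by auto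
    have "u = ?f (snd u $ 1, snd u $ 2, snd u $ 3)"
      using u(3) vec3_eq[of "snd u"] by (cases u) simp
    moreover have "(snd u $ 1, snd u $ 2, snd u $ 3) \<in> A 1 \<times> A 2 \<times> A 3" using inA[OF u] by simp
    ultimately show "u \<in> ?f ` (A 1 \<times> A 2 \<times> A 3)" by blast
  qed
  have "card {u. (octree_node m u \<and> cbox lo hi \<in> P m u) \<and> fst u = k} \<le> card (?f ` (A 1 \<times> A 2 \<times> A 3))"
    by (rule card_mono[OF _ sub]) (simp add: A_def)
  also have "\<dots> \<le> card (A 1 \<times> A 2 \<times> A 3)" by (rule card_image_le) (simp add: A_def)
  also have "\<dots> = N^3" by (simp add: A_def card_cartesian_product power3_eq_cube)
  finally show ?thesis .
qed


theorem mainTheorem8: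
  fixes \<alpha> :: real
  assumes "\<alpha> \<ge> 1"
  shows "\<exists>C::nat. \<forall>(m::nat) (lo::real^3) (hi::real^3).
           (\<forall>i. lo $ i \<in> \<int> \<and> hi $ i \<in> \<int> \<and> 0 \<le> lo $ i \<and> lo $ i \<le> hi $ i \<and> hi $ i \<le> 2 ^ m)
           \<and> fat \<alpha> lo hi
           \<longrightarrow> card {u. octree_node m u \<and> cbox lo hi \<in> P m u} \<le> C"
proof -
  define L where "L = nat \<lceil>2*\<alpha>\<rceil>"
  define N where "N = L + 2"
  have L: "2*\<alpha> \<le> real L"
  proof -
    have "0 \<le> \<lceil>2*\<alpha>\<rceil>" using assms by simp
    then have "real L = real_of_int \<lceil>2*\<alpha>\<rceil>" by (simp add: L_def)
    then show ?thesis using le_of_int_ceiling[of "2*\<alpha>"] by linarith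
  qed
  have N: "2*\<alpha> + 2 \<le> real N" using L by (simp add: N_def)
  show ?thesis
  proof (intro exI[of _ "(L+1)*N^3"] allI impI)
    fix m lo hi
    assume H: "(\<forall>i. lo $ i \<in> \<int> \<and> hi $ i \<in> \<int> \<and> 0 \<le> lo $ i \<and> lo $ i \<le> hi $ i \<and> hi $ i \<le> 2 ^ m) \<and> fat \<alpha> lo hi"
    then have ft: "fat \<alpha> lo hi" by blast
    define S where "S = {u. octree_node m u \<and> cbox lo hi \<in> P m u}"
    define K where "K = fst ` S"
    have Kfin: "finite K"
      by (rule finite_subset[of _ "{..m}"]) (auto simp: K_def S_def octree_node_def)
    have lev: "card {u\<in>S. fst u = k} \<le> N^3" if kK: "k \<in> K" for k
    proof (cases "k = 0")
      case True
      have "{u\<in>S. fst u = k} \<subseteq> {(0, 0)}"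
      proof
        fix u assume "u \<in> {u\<in>S. fst u = k}"
        then have u: "octree_node m u" "fst u = 0" using True by (auto simp: S_def)
        then have "\<forall>i. snd u $ i = 0" by (simp add: octree_node_def)
        then have "snd u = 0" by (simp add: vec_eq_iff)
        then show "u \<in> {(0,0)}" using u(2) by (cases u) simp
      qed
      then have "card {u\<in>S. fst u = k} \<le> card {(0::nat, 0::nat^3)}" by (rule card_mono[rotated]) simp
      also have "\<dots> \<le> N^3" by (simp add: N_def)
      finally show ?thesis .
    next
      case False
      from kK obtain u0 where u0: "u0 \<in> S" "fst u0 = k" by (auto simp: K_def)
      have "card {u. (octree_node m u \<and> cbox lo hi \<in> P m u) \<and> fst u = k} \<le> N^3"
        using level_card[OF assms ft N _ _ u0(2)] u0(1) False by (simp add: S_def)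
      moreover have "{u\<in>S. fst u = k} = {u. (octree_node m u \<and> cbox lo hi \<in> P m u) \<and> fst u = k}"
        by (simp add: S_def)
      ultimately show ?thesis by simp
    qed
    have cK: "card K \<le> L + 1"
    proof (cases "K = {}")
      case True then show ?thesis by simp
    next
      case False
      define k0 where "k0 = Min K"
      have k0K: "k0 \<in> K" using False Kfin by (simp add: k0_def)
      show ?thesis
      proof (cases "K - {k0} = {}")
        case True
        then have "K \<subseteq> {k0}" by blast
        then have "card K \<le> card {k0}" by (rule card_mono[rotated]) simp
        then show ?thesis by simp
      next
        case False
        define k2 where "k2 = Min (K - {k0})"
        have k2K: "k2 \<in> K - {k0}" unfolding k2_def using False Kfin by (intro Min_in) auto
        have "k0 \<le> k2" using k2K Kfin by (simp add: k0_def)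
        then have lt: "k0 < k2" using k2K by auto
        obtain u1 where u1: "u1 \<in> S" "fst u1 = k0" using k0K by (auto simp: K_def)
        obtain u2 where u2: "u2 \<in> S" "fst u2 = k2" using k2K by (auto simp: K_def)
        have "K \<subseteq> insert k0 {k2..<k2+L}"
        proof
          fix k assume kK: "k \<in> K"
          show "k \<in> insert k0 {k2..<k2+L}"
          proof (cases "k = k0")
            case True then show ?thesis by simp
          next
            case False
            then have kK': "k \<in> K - {k0}" using kK by simp
            then have "k2 \<le> k" using Kfin by (simp add: k2_def)
            obtain u3 where u3: "u3 \<in> S" "fst u3 = k" using kK by (auto simp: K_def)
            have "fst u3 < fst u2 + L"
              using L3[OF assms ft L, of m u1 u2 u3] u1 u2 u3 lt \<open>k2 \<le> k\<close> by (simp add: S_def)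
            then show ?thesis using u2 u3 \<open>k2 \<le> k\<close> by simp
          qed
        qed
        then have "card K \<le> card (insert k0 {k2..<k2+L})" by (rule card_mono[rotated]) simp
        also have "\<dots> \<le> Suc (card {k2..<k2+L})" by (rule card_insert_le_m1) simp_all
        finally show ?thesis by simp
      qed
    qed
    have "S = (\<Union>k\<in>K. {u\<in>S. fst u = k})" by (auto simp: K_def)
    then have "card S \<le> (\<Sum>k\<in>K. card {u\<in>S. fst u = k})"
      using card_UN_le[OF Kfin, of "\<lambda>k. {u\<in>S. fst u = k}"] by simp
    also have "\<dots> \<le> (\<Sum>k\<in>K. N^3)" by (rule sum_mono) (rule lev)
    also have "\<dots> = card K * N^3" by simp
    also have "\<dots> \<le> (L+1) * N^3" using cK by (rule mult_le_mono1)
    finally show "card {u. octree_node m u \<and> cbox lo hi \<in> P m u} \<le> (L+1) * N^3" by (simp add: S_def)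
  qed
qed

end
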